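(* Let $L:\mathbb{R}^n\to\mathbb{R}$ be $\mathcal{C}^1$, convex, with a unique minimizer $z_1^*$ ($L^*=L(z_1^* )$), and with $\nabla L$ Lipschitz with constant $M>0$. Let $\zeta>0$, $\bar d(t)=\frac{3}{2(t+2)}$, $\bar\beta(t)=\frac{t-1}{t+2}$, $\bar a(\tau)=\frac{2}{\tau+2}$, and $$V_1(z,\tau):=\tfrac12|\bar a(\tau)(z_1-z_1^* )+z_2|^2+\tfrac{\zeta^2}{M}(L(z_1)-L^* ).$$ Then each maximal solution $t\mapsto(z(t),\tau(t))$ of the system $\dot z_1=z_2$, $\dot z_2=-2\bar d(\tau)z_2-\frac{\zeta^2}{M}\nabla L(z_1+\bar\beta(\tau)z_2)$, $\dot\tau=1$ on $\mathbb{R}^{2n}\times\mathbb{R}_{\ge0}$ with $\tau(0)=0$ satisfies $$V_1(z(t),t)\le\frac{9}{(t+2)^2}V_1(z(1),1)\quad\text{for all }t\ge1.$$ *)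

theory Defs
  imports "HOL-Analysis.Analysis"
begin

definition dbar :: "real \<Rightarrow> real" where "dbar t = 3 / (2 * (t + 2))"
definition betabar :: "real \<Rightarrow> real" where "betabar t = (t - 1) / (t + 2)"
definition abar :: "real \<Rightarrow> real" where "abar t = 2 / (t + 2)"

definition V1 :: "('a::euclidean_space \<Rightarrow> real) \<Rightarrow> 'a \<Rightarrow> real \<Rightarrow> real \<Rightarrow> 'a \<Rightarrow> 'a \<Rightarrow> real \<Rightarrow> real" where
  "V1 L zs \<zeta> M z1 z2 \<tau> =
     (1/2) * (norm (abar \<tau> *\<^sub>R (z1 - zs) + z2))\<^sup>2 + (\<zeta>\<^sup>2 / M) * (L z1 - L zs)"

definition hb_solution :: "('a::euclidean_space \<Rightarrow> 'a) \<Rightarrow> real \<Rightarrow> real \<Rightarrow> real set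
    \<Rightarrow> (real \<Rightarrow> 'a) \<Rightarrow> (real \<Rightarrow> 'a) \<Rightarrow> (real \<Rightarrow> real) \<Rightarrow> bool" where
  "hb_solution gL \<zeta> M J z1 z2 \<tau> \<longleftrightarrow>
     is_interval J \<and> 0 \<in> J \<and> \<tau> 0 = 0 \<and>
     (\<forall>t\<in>J. \<tau> t \<ge> 0 \<and>
        (z1 has_vector_derivative z2 t) (at t within J) \<and>
        (z2 has_vector_derivative
            (- (2 * dbar (\<tau> t)) *\<^sub>R z2 t - (\<zeta>\<^sup>2 / M) *\<^sub>R gL (z1 t + betabar (\<tau> t) *\<^sub>R z2 t)))
          (at t within J) \<and>
        (\<tau> has_real_derivative 1) (at t within J))"

definition hb_maximal_solution :: "('a::euclidean_space \<Rightarrow> 'a) \<Rightarrow> real \<Rightarrow> real \<Rightarrow> real set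
    \<Rightarrow> (real \<Rightarrow> 'a) \<Rightarrow> (real \<Rightarrow> 'a) \<Rightarrow> (real \<Rightarrow> real) \<Rightarrow> bool" where
  "hb_maximal_solution gL \<zeta> M J z1 z2 \<tau> \<longleftrightarrow>
     hb_solution gL \<zeta> M J z1 z2 \<tau> \<and>
     \<not> (\<exists>J' w1 w2 \<sigma>. J \<subset> J' \<and> hb_solution gL \<zeta> M J' w1 w2 \<sigma> \<and>
          (\<forall>t\<in>J. w1 t = z1 t \<and> w2 t = z2 t \<and> \<sigma> t = \<tau> t))"

end

theory Submission
  imports Defs
begin


lemma tangent_ineq:
  fixes L :: "'a::euclidean_space \<Rightarrow> real"
  assumes grad: "\<And>x. (L has_derivative (\<lambda>h. gL x \<bullet> h)) (at x)"
    and conv: "convex_on UNIV L"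
  shows "L y \<ge> L x + gL x \<bullet> (y - x)"
proof -
  define \<phi> where "\<phi> s = L (x + s *\<^sub>R (y - x))" for s :: real
  have cphi: "convex_on UNIV \<phi>"
  proof (rule convex_onI)
    fix t a b :: real assume t: "0 < t" "t < 1"
    have "x + ((1 - t) * a + t * b) *\<^sub>R (y - x) = (1 - t) *\<^sub>R (x + a *\<^sub>R (y - x)) + t *\<^sub>R (x + b *\<^sub>R (y - x))"
      by (simp add: algebra_simps)
    then show "\<phi> ((1 - t) *\<^sub>R a + t *\<^sub>R b) \<le> (1 - t) * \<phi> a + t * \<phi> b"
      unfolding \<phi>_def using convex_onD[OF conv, of t] t by simp
  qed simp
  have d: "((\<lambda>s. x + s *\<^sub>R (y - x)) has_derivative (\<lambda>h. h *\<^sub>R (y - x))) (at 0)"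
    by (auto intro!: derivative_eq_intros)
  have "(\<phi> has_derivative (\<lambda>h. gL x \<bullet> (h *\<^sub>R (y - x)))) (at 0)"
    unfolding \<phi>_def using diff_chain_at[OF d, of L "\<lambda>h. gL x \<bullet> h"] grad[of x]
    by (simp add: o_def)
  then have "(\<phi> has_field_derivative (gL x \<bullet> (y - x))) (at 0)"
    unfolding has_field_derivative_def by (rule has_derivative_eq_rhs) (auto simp: fun_eq_iff)
  from convex_on_imp_above_tangent[OF cphi _ _ _ this, of 1]
  show ?thesis by (simp add: \<phi>_def)
qed


lemma three: "(x::'b::real_vector) + 2 *\<^sub>R x = 3 *\<^sub>R x"
proof -
  have e: "(3::real) = 1 + 2" by simp
  show ?thesis by (simp only: e scaleR_add_left scaleR_one)
qed

lemma mainthm: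
  fixes L :: "'a::euclidean_space \<Rightarrow> real" and gL :: "'a \<Rightarrow> 'a"
    and zs :: 'a and M \<zeta> :: real
    and J :: "real set" and z1 z2 :: "real \<Rightarrow> 'a" and \<tau> :: "real \<Rightarrow> real"
  assumes grad: "\<And>x. (L has_derivative (\<lambda>h. gL x \<bullet> h)) (at x)"
    and conv: "convex_on UNIV L"
    and M_pos: "M > 0"
    and sol: "hb_solution gL \<zeta> M J z1 z2 \<tau>"
    and t0: "t0 \<in> J" "t0 \<ge> 1"
  shows "V1 L zs \<zeta> M (z1 t0) (z2 t0) t0 \<le> 9 / (t0 + 2)\<^sup>2 * V1 L zs \<zeta> M (z1 1) (z2 1) 1"
proof -
  note tan = tangent_ineq[OF grad conv]
  have iJ: "is_interval J" and J0: "0 \<in> J" and tau0: "\<tau> 0 = 0"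
    and dJ: "\<And>t. t \<in> J \<Longrightarrow> \<tau> t \<ge> 0 \<and>
        (z1 has_vector_derivative z2 t) (at t within J) \<and>
        (z2 has_vector_derivative
            (- (2 * dbar (\<tau> t)) *\<^sub>R z2 t - (\<zeta>\<^sup>2 / M) *\<^sub>R gL (z1 t + betabar (\<tau> t) *\<^sub>R z2 t)))
          (at t within J) \<and>
        (\<tau> has_real_derivative 1) (at t within J)"
    using sol unfolding hb_solution_def by auto
  have "\<exists>c. \<forall>t\<in>J. \<tau> t - t = c"
  proof (rule has_field_derivative_zero_constant)
    show "convex J" using iJ by (simp add: is_interval_convex)
    fix t assume "t \<in> J"
    then have "(\<tau> has_real_derivative 1) (at t within J)" using dJ by blast
    then show "((\<lambda>t. \<tau> t - t) has_real_derivative 0) (at t within J)"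
      by (auto intro!: derivative_eq_intros)
  qed
  then obtain c where c: "\<forall>t\<in>J. \<tau> t - t = c" by blast
  with J0 tau0 have "c = 0" by force
  with c have tauid: "\<And>t. t \<in> J \<Longrightarrow> \<tau> t = t" by auto
  have sub: "{1..t0} \<subseteq> J"
    using iJ J0 t0 unfolding is_interval_1 by (meson atLeastAtMost_iff dual_order.trans subsetI zero_le_one)
  define \<epsilon> where "\<epsilon> = \<zeta>\<^sup>2 / M"
  have eps: "\<epsilon> \<ge> 0" using M_pos by (simp add: \<epsilon>_def)
  define p where "p t = 2 *\<^sub>R (z1 t - zs) + (t + 2) *\<^sub>R z2 t" for t
  define W where "W t = (1/2) * (p t \<bullet> p t) + \<epsilon> * (t + 2)\<^sup>2 * (L (z1 t) - L zs)" for t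
  define y where "y t = z1 t + betabar t *\<^sub>R z2 t" for t
  define w where "w t = - (2 * dbar t) *\<^sub>R z2 t - \<epsilon> *\<^sub>R gL (y t)" for t
  define D where "D t = p t \<bullet> (3 *\<^sub>R z2 t + (t + 2) *\<^sub>R w t) + \<epsilon> * (2 * (t + 2) * (L (z1 t) - L zs) + (t + 2)\<^sup>2 * (gL (z1 t) \<bullet> z2 t))" for t
  have WV: "W t = (t + 2)\<^sup>2 * V1 L zs \<zeta> M (z1 t) (z2 t) t" if "t \<ge> 1" for t
  proof -
    have "(t + 2) *\<^sub>R (abar t *\<^sub>R (z1 t - zs) + z2 t) = p t"
    proof -
      have "(t + 2) * abar t = 2" using that by (simp add: abar_def field_simps)
      then show ?thesis by (simp add: p_def scaleR_add_right)
    qed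
    then have "(t + 2)\<^sup>2 * (norm (abar t *\<^sub>R (z1 t - zs) + z2 t))\<^sup>2 = p t \<bullet> p t"
      by (metis norm_scaleR power2_norm_eq_inner power_mult_distrib real_norm_def abs_of_nonneg abs_power2 power2_abs)
    then show ?thesis unfolding W_def V1_def \<epsilon>_def by (simp add: algebra_simps)
  qed
  have deriv: "(W has_real_derivative D t) (at t within J)" if "t \<in> J" for t
  proof -
    have d1: "(z1 has_vector_derivative z2 t) (at t within J)"
      and d2: "(z2 has_vector_derivative w t) (at t within J)"
      using dJ[OF that] tauid[OF that] by (auto simp: w_def y_def \<epsilon>_def)
    have dp: "(p has_vector_derivative (3 *\<^sub>R z2 t + (t + 2) *\<^sub>R w t)) (at t within J)"
      unfolding p_def
      by (rule derivative_eq_intros d1 d2 refl | simp)+ (metis three add.commute)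
    have dL: "((\<lambda>t. L (z1 t)) has_real_derivative (gL (z1 t) \<bullet> z2 t)) (at t within J)"
    proof -
      have "((L \<circ> z1) has_derivative ((\<lambda>h. gL (z1 t) \<bullet> h) \<circ> (\<lambda>h. h *\<^sub>R z2 t))) (at t within J)"
        by (rule diff_chain_within[OF d1[unfolded has_vector_derivative_def]])
           (rule has_derivative_at_withinI[OF grad])
      then show ?thesis unfolding has_field_derivative_def o_def
        by (rule has_derivative_eq_rhs) (auto simp: fun_eq_iff)
    qed
    have dpp: "((\<lambda>t. p t \<bullet> p t) has_real_derivative 2 * (p t \<bullet> (3 *\<^sub>R z2 t + (t + 2) *\<^sub>R w t))) (at t within J)"
      using dp unfolding has_vector_derivative_def has_field_derivative_def
      by (rule has_derivative_eq_rhs[OF has_derivative_inner[OF _ dp[unfolded has_vector_derivative_def]]]) 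
        (auto simp: fun_eq_iff inner_commute algebra_simps)
    show ?thesis unfolding W_def D_def
      by (rule derivative_eq_intros dpp dL refl | simp)+ (simp add: algebra_simps power2_eq_square)
  qed
  have Dneg: "D t \<le> 0" if "t \<in> J" "t \<ge> 1" for t
  proof -
    define x where "x = z1 t - zs"
    define v where "v = z2 t"
    define g where "g = gL (y t)"
    define g1 where "g1 = gL (z1 t)"
    define \<beta> where "\<beta> = betabar t"
    define s where "s = t + 2"
    have s3: "s \<ge> 3" using that by (simp add: s_def)
    have b0: "\<beta> \<ge> 0" "\<beta> < 1" using that by (auto simp: \<beta>_def betabar_def)
    have yd: "y t = z1 t + \<beta> *\<^sub>R v" by (simp add: y_def \<beta>_def v_def)
    have dd: "2 * dbar t * s = 3" using that by (simp add: dbar_def s_def field_simps)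
    have dd': "s * (2 * dbar t) = 3" using dd by (simp add: algebra_simps)
    have sw: "s *\<^sub>R w t = - (s * (2 * dbar t)) *\<^sub>R v - (s * \<epsilon>) *\<^sub>R g"
      by (simp add: w_def g_def v_def scaleR_diff_right)
    have pw: "3 *\<^sub>R v + s *\<^sub>R w t = - (s * \<epsilon>) *\<^sub>R g"
      unfolding sw dd' by simp
    have pd: "p t = 2 *\<^sub>R x + s *\<^sub>R v" by (simp add: p_def x_def v_def s_def)
    have DE: "D t = \<epsilon> * s * (2 * (L (z1 t) - L zs) - 2 * (g \<bullet> x) - s * (g \<bullet> v) + s * (g1 \<bullet> v))"
      unfolding D_def s_def[symmetric] g1_def[symmetric] v_def[symmetric]
      unfolding pw pd
      by (simp add: algebra_simps inner_simps power2_eq_square inner_commute[of x g] inner_commute[of v g])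
    have a: "L zs \<ge> L (y t) + g \<bullet> (zs - y t)" using tan unfolding g_def by blast
    have b: "L (y t) \<ge> L (z1 t) + g1 \<bullet> (y t - z1 t)" using tan unfolding g1_def by blast
    have c: "L (z1 t) \<ge> L (y t) + g \<bullet> (z1 t - y t)" using tan unfolding g_def by blast
    have e1: "g \<bullet> (zs - y t) = - (g \<bullet> x) - \<beta> * (g \<bullet> v)"
      unfolding yd x_def by (simp add: algebra_simps inner_simps)
    have e2: "g1 \<bullet> (y t - z1 t) = \<beta> * (g1 \<bullet> v)" unfolding yd by (simp add: inner_simps)
    have e3: "g \<bullet> (z1 t - y t) = - \<beta> * (g \<bullet> v)" unfolding yd by (simp add: inner_simps)
    have mono: "\<beta> * ((g - g1) \<bullet> v) \<ge> 0" using b c e2 e3 by (simp add: inner_simps algebra_simps)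
    have mono2: "(g - g1) \<bullet> v \<ge> 0"
    proof (cases "\<beta> = 0")
      case True
      then have "g = g1" using yd by (simp add: g_def g1_def)
      then show ?thesis by simp
    next
      case False
      then show ?thesis using mono b0 by (simp add: zero_le_mult_iff)
    qed
    have E: "2 * (L (z1 t) - L zs) - 2 * (g \<bullet> x) - s * (g \<bullet> v) + s * (g1 \<bullet> v) \<le> (2 * \<beta> - s) * ((g - g1) \<bullet> v)"
      using a b e1 e2 by (simp add: inner_simps algebra_simps)
    have "(2 * \<beta> - s) * ((g - g1) \<bullet> v) \<le> 0"
      using mono2 b0 s3 by (simp add: mult_nonpos_nonneg)
    then have "2 * (L (z1 t) - L zs) - 2 * (g \<bullet> x) - s * (g \<bullet> v) + s * (g1 \<bullet> v) \<le> 0" using E by linarith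
    moreover have "\<epsilon> * s \<ge> 0" using eps s3 by simp
    ultimately show ?thesis unfolding DE by (simp add: mult_nonneg_nonpos)
  qed
  have "\<exists>\<xi>\<in>{1..t0}. W t0 - W 1 = (\<lambda>h. h * D \<xi>) (t0 - 1)"
  proof (rule mvt_very_simple)
    show "1 \<le> t0" by fact
    fix \<xi> assume "1 \<le> \<xi>" "\<xi> \<le> t0"
    then have "\<xi> \<in> J" using sub by auto
    from has_field_derivative_subset[OF deriv[OF this] sub]
    show "(W has_derivative (\<lambda>h. h * D \<xi>)) (at \<xi> within {1..t0})"
      by (simp add: has_field_derivative_def mult_commute_abs)
  qed
  then obtain \<xi> where xi: "\<xi> \<in> {1..t0}" "W t0 - W 1 = (t0 - 1) * D \<xi>" by auto
  have "D \<xi> \<le> 0" using xi sub by (intro Dneg) auto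
  then have "(t0 - 1) * D \<xi> \<le> 0" using t0 by (intro mult_nonneg_nonpos) auto
  then have "W t0 \<le> W 1" using xi by linarith
  then have "(t0 + 2)\<^sup>2 * V1 L zs \<zeta> M (z1 t0) (z2 t0) t0 \<le> 9 * V1 L zs \<zeta> M (z1 1) (z2 1) 1"
    using WV[of t0] WV[of 1] t0 by simp
  moreover have "(t0 + 2)\<^sup>2 > 0" using t0 by simp
  ultimately show ?thesis by (simp add: field_simps)
qed

theorem proposition5p4:
  fixes L :: "'a::euclidean_space \<Rightarrow> real" and gL :: "'a \<Rightarrow> 'a"
    and zs :: 'a and M \<zeta> :: real
    and J :: "real set" and z1 z2 :: "real \<Rightarrow> 'a" and \<tau> :: "real \<Rightarrow> real"
  assumes grad: "\<And>x. (L has_derivative (\<lambda>h. gL x \<bullet> h)) (at x)"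
    and C1: "continuous_on UNIV gL"
    and conv: "convex_on UNIV L"
    and min: "\<And>x. L zs \<le> L x"
    and unique_min: "\<And>x. (\<forall>y. L x \<le> L y) \<Longrightarrow> x = zs"
    and M_pos: "M > 0"
    and lip: "\<And>x y. norm (gL x - gL y) \<le> M * norm (x - y)"
    and zeta_pos: "\<zeta> > 0"
    and sol: "hb_maximal_solution gL \<zeta> M J z1 z2 \<tau>"
  shows "\<forall>t\<in>J. t \<ge> 1 \<longrightarrow>
           V1 L zs \<zeta> M (z1 t) (z2 t) t \<le> 9 / (t + 2)\<^sup>2 * V1 L zs \<zeta> M (z1 1) (z2 1) 1"
  proof (intro ballI impI)
  fix t assume t: "t \<in> J" "1 \<le> t"
  have hs: "hb_solution gL \<zeta> M J z1 z2 \<tau>"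
    using sol unfolding hb_maximal_solution_def by (rule conjunct1)
  show "V1 L zs \<zeta> M (z1 t) (z2 t) t \<le> 9 / (t + 2)\<^sup>2 * V1 L zs \<zeta> M (z1 1) (z2 1) 1"
    by (rule mainthm[OF grad conv M_pos hs t])
qed

end
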